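(* (i) For every $n\ge 1$, the chain triangular cactus $T_n$ of length $n$ satisfies $s(T_n)=\lfloor (n-2)/2\rfloor+2$. (ii) For every $n\ge 1$, a chain square cactus $O_n$ of length $n$ satisfies $s(O_n)=n+1$.
   Context: The saturation number $s(G)$ is the minimum cardinality of a maximal matching (a set of pairwise vertex-disjoint edges not properly contained in another such set) of $G$. A cactus is a connected graph in which no edge lies in more than one cycle. A triangular cactus is a cactus all of whose blocks are triangles; a chain triangular cactus of length $n$ is a triangular cactus with $n$ triangles in which each triangle has at most two cut-vertices and each cut-vertex is shared by exactly two triangles (equivalently, triangles $B_1,\dots,B_n$ where $B_i$ and $B_{i+1}$ share exactly one vertex and no other pairs share vertices); it has $2n+1$ vertices and $3n$ edges. A chain square cactus $O_n$ of length $n$ is defined in the same way with every triangle replaced by a $4$-cycle $C_4$ (consecutive $4$-cycles sharing exactly one vertex, each cut-vertex shared by exactly two blocks). *)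

theory Defs
  imports Complex_Main
begin

text \<open>Simple graphs: a vertex set V and a set E of 2-element vertex sets (edges).\<close>

definition matching :: "'a set set \<Rightarrow> 'a set set \<Rightarrow> bool" where
  "matching E M \<longleftrightarrow> M \<subseteq> E \<and> (\<forall>e\<in>M. \<forall>f\<in>M. e \<noteq> f \<longrightarrow> e \<inter> f = {})"

definition maximal_matching :: "'a set set \<Rightarrow> 'a set set \<Rightarrow> bool" where
  "maximal_matching E M \<longleftrightarrow> matching E M \<and> \<not> (\<exists>M'. matching E M' \<and> M \<subset> M')"

definition sat_num :: "'a set set \<Rightarrow> nat" where
  "sat_num E = Min (card ` {M. maximal_matching E M})"

definition chain_tri_cactus :: "'a set \<Rightarrow> 'a set set \<Rightarrow> nat \<Rightarrow> bool" where
  "chain_tri_cactus V E n \<longleftrightarrow> (\<exists>B :: nat \<Rightarrow> 'a set.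
     (\<forall>i<n. card (B i) = 3) \<and>
     V = (\<Union>i<n. B i) \<and>
     E = (\<Union>i<n. {{x, y} | x y. x \<in> B i \<and> y \<in> B i \<and> x \<noteq> y}) \<and>
     (\<forall>i. i + 1 < n \<longrightarrow> card (B i \<inter> B (i + 1)) = 1) \<and>
     (\<forall>i j. i < n \<and> j < n \<and> i + 1 < j \<longrightarrow> B i \<inter> B j = {}))"

text \<open>Chain square cactus of length n: the same with every triangle replaced by a 4-cycle
  (the positions of the cut vertices on each 4-cycle are arbitrary).\<close>
definition chain_sq_cactus :: "'a set \<Rightarrow> 'a set set \<Rightarrow> nat \<Rightarrow> bool" where
  "chain_sq_cactus V E n \<longleftrightarrow> (\<exists>(B :: nat \<Rightarrow> 'a set) (C :: nat \<Rightarrow> 'a set set).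
     (\<forall>i<n. \<exists>a b c d. distinct [a, b, c, d] \<and> B i = {a, b, c, d} \<and>
                       C i = {{a, b}, {b, c}, {c, d}, {d, a}}) \<and>
     V = (\<Union>i<n. B i) \<and>
     E = (\<Union>i<n. C i) \<and>
     (\<forall>i. i + 1 < n \<longrightarrow> card (B i \<inter> B (i + 1)) = 1) \<and>
     (\<forall>i j. i < n \<and> j < n \<and> i + 1 < j \<longrightarrow> B i \<inter> B j = {}))"

end

theory Submission
  imports Defs
begin


definition chainB :: "nat \<Rightarrow> (nat \<Rightarrow> 'a set) \<Rightarrow> (nat \<Rightarrow> 'a set set) \<Rightarrow> bool" where
  "chainB n B C \<longleftrightarrow> (\<forall>i<n. finite (B i) \<and> (\<forall>e\<in>C i. e \<subseteq> B i \<and> card e = 2)) \<and>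
     (\<forall>i. i + 1 < n \<longrightarrow> card (B i \<inter> B (i + 1)) = 1) \<and>
     (\<forall>i j. i < n \<and> j < n \<and> i + 1 < j \<longrightarrow> B i \<inter> B j = {})"

lemma maximal_iff:
  assumes "\<forall>e\<in>E. card e = 2"
  shows "maximal_matching E M \<longleftrightarrow> matching E M \<and> (\<forall>e\<in>E. e \<inter> \<Union>M \<noteq> {})"
proof
  assume mm: "maximal_matching E M"
  hence m: "matching E M" by (simp add: maximal_matching_def)
  show "matching E M \<and> (\<forall>e\<in>E. e \<inter> \<Union>M \<noteq> {})"
  proof (intro conjI ballI m)
    fix e assume e: "e \<in> E"
    show "e \<inter> \<Union>M \<noteq> {}"
    proof
      assume dis: "e \<inter> \<Union>M = {}"
      have "card e = 2" using assms e by blast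
      hence ne: "e \<noteq> {}" by auto
      have eM: "e \<notin> M"
      proof
        assume "e \<in> M"
        hence "e \<subseteq> \<Union>M" by blast
        thus False using dis ne by blast
      qed
      have dj: "\<forall>f\<in>M. e \<inter> f = {}" using dis by blast
      have "matching E (insert e M)" unfolding matching_def
      proof (intro conjI ballI impI)
        show "insert e M \<subseteq> E" using m e unfolding matching_def by blast
        fix f g assume f: "f \<in> insert e M" and g: "g \<in> insert e M" and fg: "f \<noteq> g"
        show "f \<inter> g = {}"
        proof (cases "f = e")
          case True
          hence "g \<in> M" using g fg by blast
          thus ?thesis using dj True by blast
        next
          case False
          hence fM: "f \<in> M" using f by blast
          show ?thesis
          proof (cases "g = e")
            case True thus ?thesis using dj fM by blast
          next
            case False
            hence "g \<in> M" using g by blast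
            thus ?thesis using m fM fg unfolding matching_def by blast
          qed
        qed
      qed
      moreover have "M \<subset> insert e M" using eM by blast
      ultimately show False using mm unfolding maximal_matching_def by blast
    qed
  qed
next
  assume h: "matching E M \<and> (\<forall>e\<in>E. e \<inter> \<Union>M \<noteq> {})"
  show "maximal_matching E M" unfolding maximal_matching_def
  proof (intro conjI notI)
    show "matching E M" using h by simp
    assume "\<exists>M'. matching E M' \<and> M \<subset> M'"
    then obtain M' where m': "matching E M'" "M \<subset> M'" by blast
    then obtain e where e: "e \<in> M'" "e \<notin> M" by blast
    have "e \<in> E" using m' e unfolding matching_def by blast
    moreover have "\<forall>f\<in>M. e \<inter> f = {}"
    proof
      fix f assume "f \<in> M"
      hence "f \<in> M'" "f \<noteq> e" using m' e by auto
      thus "e \<inter> f = {}" using m' e unfolding matching_def by blast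
    qed
    hence "e \<inter> \<Union>M = {}" by blast
    ultimately show False using h by blast
  qed
qed

lemma sat_num_eqI:
  assumes "finite E" "\<And>M. maximal_matching E M \<Longrightarrow> k \<le> card M"
    "maximal_matching E M0" "card M0 = k"
  shows "sat_num E = k"
proof -
  have "{M. maximal_matching E M} \<subseteq> Pow E"
    unfolding maximal_matching_def matching_def by blast
  hence "finite {M. maximal_matching E M}" using assms(1) by (meson finite_Pow_iff finite_subset)
  hence fin: "finite (card ` {M. maximal_matching E M})" by (rule finite_imageI)
  have mem: "k \<in> card ` {M. maximal_matching E M}" using assms(3,4) by blast
  show ?thesis unfolding sat_num_def
    by (rule Min_eqI[OF fin _ mem]) (use assms(2) in blast)
qed

lemma chainB_inter:
  assumes "chainB n B C" "i < n" "j < n" "B i \<inter> B j \<noteq> {}"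
  shows "i = j \<or> i + 1 = j \<or> j + 1 = i"
proof (rule ccontr)
  assume "\<not> ?thesis"
  hence c: "i + 1 < j \<or> j + 1 < i" by arith
  have d: "\<forall>i j. i<n \<and> j<n \<and> i+1<j \<longrightarrow> B i \<inter> B j = {}"
    using assms(1) unfolding chainB_def by blast
  from c show False
  proof
    assume "i + 1 < j"
    hence "B i \<inter> B j = {}" using d assms(2,3) by blast
    thus False using assms(4) by blast
  next
    assume "j + 1 < i"
    hence "B j \<inter> B i = {}" using d assms(2,3) by blast
    thus False using assms(4) by blast
  qed
qed

lemma chainB_card_inter:
  assumes "chainB n B C" "i < n" "j < n" "i \<noteq> j"
  shows "card (B i \<inter> B j) \<le> 1"
proof (cases "B i \<inter> B j = {}")
  case True thus ?thesis by simp
next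
  case False
  have d: "\<forall>i. i + 1 < n \<longrightarrow> card (B i \<inter> B (i + 1)) = 1"
    using assms(1) unfolding chainB_def by blast
  have "i + 1 = j \<or> j + 1 = i" using chainB_inter[OF assms(1-3) False] assms(4) by blast
  thus ?thesis
  proof
    assume "i + 1 = j" thus ?thesis using d assms(3) by auto
  next
    assume h: "j + 1 = i"
    have "B i \<inter> B j = B j \<inter> B (j + 1)" using h by blast
    thus ?thesis using d assms(2) h by auto
  qed
qed

lemma chainB_C_disj:
  assumes "chainB n B C" "i < n" "j < n" "i \<noteq> j"
  shows "C i \<inter> C j = {}"
proof (rule ccontr)
  assume "C i \<inter> C j \<noteq> {}"
  then obtain e where "e \<in> C i" "e \<in> C j" by blast
  hence s: "e \<subseteq> B i \<inter> B j" and c: "card e = 2" using assms(1,2,3) unfolding chainB_def by auto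
  have f: "finite (B i \<inter> B j)" using assms unfolding chainB_def by auto
  have "card e \<le> card (B i \<inter> B j)" by (rule card_mono[OF f s])
  thus False using chainB_card_inter[OF assms] c by simp
qed

lemma chainB_finC:
  assumes "chainB n B C" "i < n" shows "finite (C i)"
proof -
  have "C i \<subseteq> Pow (B i)" "finite (B i)" using assms unfolding chainB_def by auto
  thus ?thesis by (meson finite_Pow_iff finite_subset)
qed

lemma chainB_card_M:
  assumes "chainB n B C" "M \<subseteq> (\<Union>i<n. C i)"
  shows "card M = (\<Sum>i<n. card (M \<inter> C i))"
proof -
  have "M = (\<Union>i<n. M \<inter> C i)" using assms(2) by blast
  hence "card M = card (\<Union>i<n. M \<inter> C i)" by simp
  also have "\<dots> = (\<Sum>i<n. card (M \<inter> C i))"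
    by (rule card_UN_disjoint) (use chainB_finC[OF assms(1)] chainB_C_disj[OF assms(1)] in auto)
  finally show ?thesis .
qed

definition Xs :: "'a set set \<Rightarrow> (nat \<Rightarrow> 'a set) \<Rightarrow> (nat \<Rightarrow> 'a set set) \<Rightarrow> nat \<Rightarrow> 'a set" where
  "Xs M B C i = {v \<in> B i. \<exists>e\<in>M. v \<in> e \<and> e \<notin> C i}"

lemma Xs_sum:
  assumes ch: "chainB n B C" and m: "matching E M" and ME: "M \<subseteq> (\<Union>i<n. C i)"
  shows "(\<Sum>i<n. card (Xs M B C i)) \<le> n - 1"
proof -
  define S where "S = (SIGMA i:{..<n}. Xs M B C i)"
  define Cut where "Cut = (\<Union>j<n-1. B j \<inter> B (j+1))"
  have finX: "\<forall>i\<in>{..<n}. finite (Xs M B C i)" using ch unfolding chainB_def Xs_def by auto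
  have "(\<Sum>i<n. card (Xs M B C i)) = card S" unfolding S_def
    by (rule card_SigmaI[symmetric]) (use finX in auto)
  also have "card S \<le> card Cut"
  proof (rule card_inj_on_le[where f=snd])
    show "inj_on snd S"
    proof (rule inj_onI)
      fix x y assume xS: "x \<in> S" and yS: "y \<in> S" and eq: "snd x = snd y"
      obtain i v where x: "x = (i, v)" by (cases x)
      obtain i' v' where y: "y = (i', v')" by (cases y)
      have vv: "v' = v" using eq x y by simp
      from xS x have i: "i < n" "v \<in> B i" "\<exists>e\<in>M. v \<in> e \<and> e \<notin> C i"
        unfolding S_def Xs_def by auto
      from yS y vv have i': "i' < n" "v \<in> B i'" "\<exists>e\<in>M. v \<in> e \<and> e \<notin> C i'"
        unfolding S_def Xs_def by auto
      show "x = y"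
      proof (rule ccontr)
        assume "x \<noteq> y"
        hence ne: "i \<noteq> i'" using x y vv by simp
        obtain e where e: "e \<in> M" "v \<in> e" "e \<notin> C i" using i by blast
        obtain e' where e': "e' \<in> M" "v \<in> e'" "e' \<notin> C i'" using i' by blast
        have "e = e'" using m e e' unfolding matching_def by blast
        obtain k where k: "k < n" "e \<in> C k" using ME e by blast
        have "v \<in> B k" using ch k e unfolding chainB_def by blast
        have k1: "k \<noteq> i" "k \<noteq> i'" using k e e' \<open>e = e'\<close> by auto
        have a1: "i = k \<or> i + 1 = k \<or> k + 1 = i"
          using chainB_inter[OF ch i(1) k(1)] i(2) \<open>v \<in> B k\<close> by blast
        have a2: "i' = k \<or> i' + 1 = k \<or> k + 1 = i'"
          using chainB_inter[OF ch i'(1) k(1)] i'(2) \<open>v \<in> B k\<close> by blast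
        have a3: "i = i' \<or> i + 1 = i' \<or> i' + 1 = i"
          using chainB_inter[OF ch i(1) i'(1)] i(2) i'(2) by blast
        show False using a1 a2 a3 k1 ne by arith
      qed
    qed
    show "snd ` S \<subseteq> Cut"
    proof
      fix w assume "w \<in> snd ` S"
      then obtain i v where iv: "(i, v) \<in> S" "w = v" by auto
      from iv have i: "i < n" "v \<in> B i" "\<exists>e\<in>M. v \<in> e \<and> e \<notin> C i"
        unfolding S_def Xs_def by auto
      obtain e where e: "e \<in> M" "v \<in> e" "e \<notin> C i" using i by blast
      obtain k where k: "k < n" "e \<in> C k" using ME e by blast
      have "v \<in> B k" using ch k e unfolding chainB_def by blast
      have "k \<noteq> i" using k e by auto
      hence "i + 1 = k \<or> k + 1 = i"
        using chainB_inter[OF ch i(1) k(1)] i(2) \<open>v \<in> B k\<close> by blast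
      thus "w \<in> Cut"
      proof
        assume "i + 1 = k" thus ?thesis unfolding Cut_def using iv i \<open>v \<in> B k\<close> k by auto
      next
        assume "k + 1 = i" thus ?thesis unfolding Cut_def using iv i \<open>v \<in> B k\<close> k by auto
      qed
    qed
    show "finite Cut" unfolding Cut_def using ch unfolding chainB_def by auto
  qed
  also have "card Cut \<le> (\<Sum>j<n-1. card (B j \<inter> B (j+1)))" unfolding Cut_def
    by (rule card_UN_le) simp
  also have "\<dots> = (\<Sum>j<n-1. 1)" by (rule sum.cong) (use ch in \<open>auto simp: chainB_def\<close>)
  also have "\<dots> = n - 1" by simp
  finally show ?thesis .
qed

lemma cover:
  assumes ch: "chainB n B C" and E: "E = (\<Union>i<n. C i)" and mm: "maximal_matching E M"
    and i: "i < n" and e: "e \<in> C i"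
  shows "e \<inter> (Xs M B C i \<union> \<Union>(M \<inter> C i)) \<noteq> {}"
proof -
  have c2: "\<forall>e\<in>E. card e = 2" using ch E unfolding chainB_def by auto
  have "e \<in> E" using E i e by blast
  hence "e \<inter> \<Union>M \<noteq> {}" using mm maximal_iff[OF c2] by blast
  then obtain v e' where v: "v \<in> e" "v \<in> e'" "e' \<in> M" by blast
  have "v \<in> B i" using ch i e v unfolding chainB_def by blast
  show ?thesis
  proof (cases "e' \<in> C i")
    case True thus ?thesis using v by blast
  next
    case False
    hence "v \<in> Xs M B C i" unfolding Xs_def using v \<open>v \<in> B i\<close> by blast
    thus ?thesis using v by blast
  qed
qed

lemma card_K:
  assumes ch: "chainB n B C" and i: "i < n" and m: "matching E M"
  shows "card (\<Union>(M \<inter> C i)) = 2 * card (M \<inter> C i)"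
proof -
  have fB: "finite (B i)" and sub: "\<forall>e\<in>C i. e \<subseteq> B i \<and> card e = 2"
    using ch i unfolding chainB_def by auto
  have pw: "pairwise disjnt (M \<inter> C i)"
    using m unfolding pairwise_def disjnt_def matching_def by blast
  have fin: "\<And>A. A \<in> M \<inter> C i \<Longrightarrow> finite A"
    using sub fB by (meson IntD2 finite_subset)
  have "card (\<Union>(M \<inter> C i)) = sum card (M \<inter> C i)"
    by (rule card_Union_disjoint[OF pw fin])
  also have "\<dots> = sum (\<lambda>_. 2) (M \<inter> C i)"
    by (rule sum.cong) (use sub in auto)
  also have "\<dots> = 2 * card (M \<inter> C i)" by simp
  finally show ?thesis .
qed

lemma K_sub: "chainB n B C \<Longrightarrow> i < n \<Longrightarrow> \<Union>(M \<inter> C i) \<subseteq> B i"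
  unfolding chainB_def by blast

lemma Xs_sub: "Xs M B C i \<subseteq> B i" unfolding Xs_def by blast



lemma upper_gen:
  assumes ch: "chainB n B C" and E: "E = (\<Union>i<n. C i)"
   and FC: "\<And>i. i<n \<Longrightarrow> F i \<subseteq> C i"
   and Fd: "\<And>i f g. i<n \<Longrightarrow> f\<in>F i \<Longrightarrow> g\<in>F i \<Longrightarrow> f\<noteq>g \<Longrightarrow> f\<inter>g={}"
   and Fc: "\<And>i f g. i+1<n \<Longrightarrow> f\<in>F i \<Longrightarrow> g\<in>F (Suc i) \<Longrightarrow> f\<inter>g={}"
   and cov: "\<And>i e. i<n \<Longrightarrow> e\<in>C i \<Longrightarrow> e \<inter> \<Union>(\<Union>j<n. F j) \<noteq> {}"
  shows "maximal_matching E (\<Union>j<n. F j) \<and> card (\<Union>j<n. F j) = (\<Sum>j<n. card (F j))"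
proof
  have c2: "\<forall>e\<in>E. card e = 2" using ch E unfolding chainB_def by auto
  have m: "matching E (\<Union>j<n. F j)" unfolding matching_def
  proof (intro conjI ballI impI)
    show "(\<Union>j<n. F j) \<subseteq> E" using FC E by blast
    fix f g assume f: "f \<in> (\<Union>j<n. F j)" and g: "g \<in> (\<Union>j<n. F j)" and fg: "f \<noteq> g"
    obtain i where i: "i < n" "f \<in> F i" using f by blast
    obtain j where j: "j < n" "g \<in> F j" using g by blast
    have fB: "f \<subseteq> B i" using ch i FC unfolding chainB_def by blast
    have gB: "g \<subseteq> B j" using ch j FC unfolding chainB_def by blast
    consider "i = j" | "i + 1 = j" | "j + 1 = i" | "i + 1 < j" | "j + 1 < i" by arith
    thus "f \<inter> g = {}"
    proof cases
      case 1 thus ?thesis using Fd i j fg by blast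
    next
      case 2 thus ?thesis using Fc[of i f g] i j by simp
    next
      case 3 thus ?thesis using Fc[of j g f] i j by (simp add: Int_commute)
    next
      case 4
      hence "B i \<inter> B j = {}" using ch i j unfolding chainB_def by blast
      thus ?thesis using fB gB by blast
    next
      case 5
      hence "B j \<inter> B i = {}" using ch i j unfolding chainB_def by blast
      thus ?thesis using fB gB by blast
    qed
  qed
  have "\<forall>e\<in>E. e \<inter> \<Union>(\<Union>j<n. F j) \<noteq> {}"
  proof
    fix e assume "e \<in> E"
    then obtain i where "i < n" "e \<in> C i" using E by blast
    thus "e \<inter> \<Union>(\<Union>j<n. F j) \<noteq> {}" by (rule cov)
  qed
  thus "maximal_matching E (\<Union>j<n. F j)" using m maximal_iff[OF c2] by blast
  show "card (\<Union>j<n. F j) = (\<Sum>j<n. card (F j))"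
  proof (rule card_UN_disjoint)
    show "finite {..<n}" by simp
    show "\<forall>i\<in>{..<n}. finite (F i)" using chainB_finC[OF ch] FC finite_subset by blast
    show "\<forall>i\<in>{..<n}. \<forall>j\<in>{..<n}. i \<noteq> j \<longrightarrow> F i \<inter> F j = {}"
    proof (intro ballI impI)
      fix i j assume "i \<in> {..<n}" "j \<in> {..<n}" "i \<noteq> j"
      thus "F i \<inter> F j = {}" using chainB_C_disj[OF ch, of i j] FC[of i] FC[of j] by auto
    qed
  qed
qed

lemma two_le_card: "finite A \<Longrightarrow> u \<in> A \<Longrightarrow> v \<in> A \<Longrightarrow> u \<noteq> v \<Longrightarrow> 2 \<le> card A"
proof -
  assume a: "finite A" "u \<in> A" "v \<in> A" "u \<noteq> v"
  have "card {u, v} \<le> card A" using a by (intro card_mono) auto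
  thus ?thesis using a(4) by simp
qed

lemma sq_local_lower:
  assumes d: "distinct [a,b,c,d]" and Cq: "Cq = {{a,b},{b,c},{c,d},{d,a}}"
    and F: "F \<subseteq> Cq" and Fd: "\<forall>f\<in>F. \<forall>g\<in>F. f\<noteq>g \<longrightarrow> f\<inter>g={}" and fX: "finite X"
    and cv: "\<forall>e\<in>Cq. e \<inter> (X \<union> \<Union>F) \<noteq> {}"
  shows "2 \<le> card F + card X"
proof -
  have fF: "finite F" using F Cq finite_subset by blast
  consider "card F = 0" | "card F = 1" | "card F \<ge> 2" by arith
  thus ?thesis
  proof cases
    case 1
    hence "F = {}" using fF by simp
    hence h1: "{a,b} \<inter> X \<noteq> {}" and h2: "{c,d} \<inter> X \<noteq> {}" using cv Cq by auto
    obtain u where u: "u \<in> X" "u = a \<or> u = b" using h1 by blast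
    obtain v where v: "v \<in> X" "v = c \<or> v = d" using h2 by blast
    have "u \<noteq> v" using u v d by auto
    hence "2 \<le> card X" using two_le_card[OF fX u(1) v(1)] by simp
    thus ?thesis by simp
  next
    case 2
    then obtain f where f: "F = {f}" using card_1_singletonE by blast
    have "f \<in> Cq" using F f by blast
    hence "\<exists>g\<in>Cq. g \<inter> f = {}" using Cq d by auto
    then obtain g where g: "g \<in> Cq" "g \<inter> f = {}" by blast
    have "g \<inter> (X \<union> f) \<noteq> {}" using cv g f by auto
    hence "X \<noteq> {}" using g by blast
    hence "card X \<ge> 1" using fX by (simp add: Suc_le_eq card_gt_0_iff)
    thus ?thesis using 2 by simp
  qed simp
qed

lemma tri_local_lower:
  assumes cB: "card Bt = 3" and cv: "\<forall>x\<in>Bt. \<forall>y\<in>Bt. x \<noteq> y \<longrightarrow> {x,y} \<inter> T \<noteq> {}"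
  shows "2 \<le> card (Bt \<inter> T)"
proof -
  obtain x y z where B: "Bt = {x,y,z}" "x \<noteq> y" "y \<noteq> z" "x \<noteq> z" using cB card_3_iff by metis
  have f: "finite (Bt \<inter> T)" using B by simp
  have h1: "x \<in> T \<or> y \<in> T" using cv B by auto
  have h2: "y \<in> T \<or> z \<in> T" using cv B by auto
  have h3: "x \<in> T \<or> z \<in> T" using cv B by auto
  show ?thesis
  proof (cases "x \<in> T")
    case True
    show ?thesis
    proof (cases "y \<in> T")
      case True thus ?thesis using two_le_card[OF f, of x y] B \<open>x \<in> T\<close> by auto
    next
      case False thus ?thesis using two_le_card[OF f, of x z] B \<open>x \<in> T\<close> h2 by auto
    qed
  next
    case False thus ?thesis using two_le_card[OF f, of y z] B h1 h3 by auto
  qed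
qed

lemma sq_local_upper_a:
  assumes d: "distinct [a,b,c,d]" and Cq: "Cq = {{a,b},{b,c},{c,d},{d,a}}"
    and Q: "Q \<subseteq> {b,c,d}" and cQ: "card Q \<le> 1"
  shows "\<exists>f\<in>Cq. a \<notin> f \<and> Q \<subseteq> f \<and> (\<forall>e\<in>Cq. e \<inter> insert a f \<noteq> {})"
proof (cases "Q \<subseteq> {b,c}")
  case True
  show ?thesis by (rule bexI[of _ "{b,c}"]) (use True d Cq in auto)
next
  case False
  have fQ: "finite Q" using Q finite_subset by blast
  have "\<forall>x\<in>Q. \<forall>y\<in>Q. x = y" using cQ card_le_Suc0_iff_eq[OF fQ] by simp
  hence "Q \<subseteq> {d}" using False Q by blast
  thus ?thesis by (intro bexI[of _ "{c,d}"]) (use d Cq in auto)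
qed

lemma sq_local_upper:
  assumes d: "distinct [a,b,c,d]" and Cq: "Cq = {{a,b},{b,c},{c,d},{d,a}}"
    and p: "p \<in> {a,b,c,d}" and Q: "Q \<subseteq> {a,b,c,d} - {p}" and cQ: "card Q \<le> 1"
  shows "\<exists>f\<in>Cq. p \<notin> f \<and> Q \<subseteq> f \<and> (\<forall>e\<in>Cq. e \<inter> insert p f \<noteq> {})"
proof -
  consider "p = a" | "p = b" | "p = c" | "p = d" using p by blast
  thus ?thesis
  proof cases
    case 1 thus ?thesis using sq_local_upper_a[OF d Cq _ cQ] Q d by auto
  next
    case 2
    have "distinct [b,c,d,a]" using d by auto
    moreover have "Cq = {{b,c},{c,d},{d,a},{a,b}}" using Cq by auto
    ultimately show ?thesis using sq_local_upper_a[of b c d a Cq Q] Q d 2 cQ by auto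
  next
    case 3
    have "distinct [c,d,a,b]" using d by auto
    moreover have "Cq = {{c,d},{d,a},{a,b},{b,c}}" using Cq by auto
    ultimately show ?thesis using sq_local_upper_a[of c d a b Cq Q] Q d 3 cQ by auto
  next
    case 4
    have "distinct [d,a,b,c]" using d by auto
    moreover have "Cq = {{d,a},{a,b},{b,c},{c,d}}" using Cq by auto
    ultimately show ?thesis using sq_local_upper_a[of d a b c Cq Q] Q d 4 cQ by auto
  qed
qed



lemma lower_sum:
  assumes ch: "chainB n B C" and E: "E = (\<Union>i<n. C i)" and mm: "maximal_matching E M"
    and w: "\<And>i. i < n \<Longrightarrow> 2 \<le> w * card (M \<inter> C i) + card (Xs M B C i)"
  shows "2 * n \<le> w * card M + (n - 1)"
proof -
  have m: "matching E M" using mm unfolding maximal_matching_def by blast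
  have ME: "M \<subseteq> (\<Union>i<n. C i)" using m E unfolding matching_def by blast
  have "2 * n = (\<Sum>i<n. (2::nat))" by simp
  also have "\<dots> \<le> (\<Sum>i<n. w * card (M \<inter> C i) + card (Xs M B C i))"
    by (rule sum_mono) (use w in simp)
  also have "\<dots> = w * (\<Sum>i<n. card (M \<inter> C i)) + (\<Sum>i<n. card (Xs M B C i))"
    by (simp add: sum.distrib sum_distrib_left)
  also have "\<dots> = w * card M + (\<Sum>i<n. card (Xs M B C i))"
    using chainB_card_M[OF ch ME] by simp
  also have "\<dots> \<le> w * card M + (n - 1)"
    using Xs_sum[OF ch m ME] by simp
  finally show ?thesis .
qed

lemma ext3:
  assumes "finite Bt" "card Bt = 3" "A \<subseteq> Bt" "card A \<le> 2"
  shows "\<exists>g. g \<subseteq> Bt \<and> card g = 2 \<and> A \<subseteq> g"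
proof -
  have fA: "finite A" using assms finite_subset by blast
  have "card (Bt - A) = 3 - card A" using card_Diff_subset[OF fA assms(3)] assms(2) by simp
  hence "2 - card A \<le> card (Bt - A)" by simp
  then obtain T where T: "T \<subseteq> Bt - A" "card T = 2 - card A" "finite T"
    by (rule obtain_subset_with_card_n)
  have "card (A \<union> T) = card A + card T" by (rule card_Un_disjoint) (use fA T in auto)
  hence "card (A \<union> T) = 2" using T assms(4) by simp
  thus ?thesis using T assms(3) by (intro exI[of _ "A \<union> T"]) auto
qed

lemma four_in_three:
  assumes "finite Bt" "card Bt = 3" "x \<in> Bt" "y \<in> Bt" "u \<in> Bt" "v \<in> Bt" "x \<noteq> y" "u \<noteq> v"
    "x \<noteq> u" "x \<noteq> v" "y \<noteq> u" "y \<noteq> v"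
  shows False
proof -
  have "card {x,y,u,v} \<le> card Bt" using assms by (intro card_mono) auto
  moreover have "card {x,y,u,v} = 4" using assms by simp
  ultimately show False using assms(2) by simp
qed

lemma count_even:
  "(\<Sum>i<m. (if even i then 1 else 0::nat)) = (m + 1) div 2"
  by (induction m) auto

lemma count_tri:
  assumes "n \<ge> 1"
  shows "(\<Sum>i<n. (if even i \<or> i = n - 1 then 1 else 0::nat)) = (n + 2) div 2"
proof -
  obtain m where n: "n = Suc m" using assms by (cases n) auto
  have "(\<Sum>i<n. (if even i \<or> i = n - 1 then 1 else 0::nat))
      = (\<Sum>i<m. (if even i \<or> i = m then 1 else 0::nat)) + 1" using n by simp
  also have "(\<Sum>i<m. (if even i \<or> i = m then 1 else 0::nat)) = (\<Sum>i<m. (if even i then 1 else 0::nat))"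
    by (rule sum.cong) auto
  finally show ?thesis using count_even[of m] n by simp
qed

lemma count_sq:
  "(\<Sum>i<n. (if i = 0 then 2 else 1::nat)) = (if n = 0 then 0 else n + 1)"
  by (induction n) auto



lemma tri_main:
  assumes n1: "n \<ge> 1" and tc: "chain_tri_cactus V E n"
  shows "sat_num E = (n + 2) div 2"
proof -
  obtain B :: "nat \<Rightarrow> 'a set" where
    c3: "\<forall>i<n. card (B i) = 3" and
    Edef: "E = (\<Union>i<n. {{x, y} | x y. x \<in> B i \<and> y \<in> B i \<and> x \<noteq> y})" and
    cut: "\<forall>i. i + 1 < n \<longrightarrow> card (B i \<inter> B (i + 1)) = 1" and
    dis: "\<forall>i j. i < n \<and> j < n \<and> i + 1 < j \<longrightarrow> B i \<inter> B j = {}"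
    using tc unfolding chain_tri_cactus_def by blast
  define C where "C i = {{x, y} | x y. x \<in> B i \<and> y \<in> B i \<and> x \<noteq> y}" for i
  have E: "E = (\<Union>i<n. C i)" using Edef unfolding C_def by simp
  have fB: "\<And>i. i < n \<Longrightarrow> finite (B i)" using c3 by (metis card.infinite zero_neq_numeral)
  have ch: "chainB n B C" unfolding chainB_def
  proof (intro conjI allI impI ballI)
    fix i assume i: "i < n"
    show "finite (B i)" using fB i .
    fix e assume "e \<in> C i"
    thus "e \<subseteq> B i" "card e = 2" unfolding C_def by auto
  qed (use cut dis in auto)
  have inC: "\<And>i g. g \<subseteq> B i \<Longrightarrow> card g = 2 \<Longrightarrow> g \<in> C i"
  proof -
    fix i g assume "g \<subseteq> B i" "card g = 2"
    then obtain x y where "g = {x,y}" "x \<noteq> y" by (meson card_2_iff)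
    thus "g \<in> C i" unfolding C_def using \<open>g \<subseteq> B i\<close> by auto
  qed
  have lower: "\<And>M. maximal_matching E M \<Longrightarrow> (n + 2) div 2 \<le> card M"
  proof -
    fix M assume mm: "maximal_matching E M"
    have m: "matching E M" using mm unfolding maximal_matching_def by blast
    have "2 * n \<le> 2 * card M + (n - 1)"
    proof (rule lower_sum[OF ch E mm])
      fix i assume i: "i < n"
      define T where "T = Xs M B C i \<union> \<Union>(M \<inter> C i)"
      have cvT: "\<forall>x\<in>B i. \<forall>y\<in>B i. x \<noteq> y \<longrightarrow> {x,y} \<inter> T \<noteq> {}"
      proof (intro ballI impI)
        fix x y assume "x \<in> B i" "y \<in> B i" "x \<noteq> y"
        hence "{x,y} \<in> C i" unfolding C_def by blast
        thus "{x,y} \<inter> T \<noteq> {}" unfolding T_def by (rule cover[OF ch E mm i])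
      qed
      have "2 \<le> card (B i \<inter> T)" by (rule tri_local_lower[OF c3[rule_format, OF i] cvT])
      also have "\<dots> \<le> card T"
        by (rule card_mono) (use fB[OF i] Xs_sub[of M B C i] K_sub[OF ch i, of M] in \<open>auto simp: T_def intro: finite_subset\<close>)
      also have "\<dots> \<le> card (Xs M B C i) + card (\<Union>(M \<inter> C i))" unfolding T_def by (rule card_Un_le)
      also have "\<dots> = card (Xs M B C i) + 2 * card (M \<inter> C i)" using card_K[OF ch i m] by simp
      finally show "2 \<le> 2 * card (M \<inter> C i) + card (Xs M B C i)" by simp
    qed
    thus "(n + 2) div 2 \<le> card M" using n1 by linarith
  qed
  define L where "L i = (if 0 < i then B (i-1) \<inter> B i else {})" for i
  define R where "R i = (if i + 1 < n then B i \<inter> B (Suc i) else {})" for i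
  define f where "f i = (SOME g. g \<subseteq> B i \<and> card g = 2 \<and> L i \<union> R i \<subseteq> g)" for i
  define F where "F i = (if even i then {f i} else if i = n - 1 then {B i - L i} else {})" for i
  have Lc: "\<And>i. 0 < i \<Longrightarrow> i < n \<Longrightarrow> L i = B (i-1) \<inter> B i \<and> card (L i) = 1"
  proof -
    fix i :: nat assume "0 < i" "i < n"
    then obtain k where k: "i = Suc k" by (cases i) auto
    thus "L i = B (i-1) \<inter> B i \<and> card (L i) = 1" using cut \<open>i < n\<close> unfolding L_def by simp
  qed
  have Lsub: "\<And>i. L i \<subseteq> B i" unfolding L_def by auto
  have Lle: "\<And>i. i < n \<Longrightarrow> card (L i) \<le> 1"
  proof -
    fix i assume i: "i < n"
    show "card (L i) \<le> 1"
    proof (cases "i = 0")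
      case True thus ?thesis unfolding L_def by simp
    next
      case False hence "card (L i) = 1" using Lc[of i] i by blast
      thus ?thesis by linarith
    qed
  qed
  have Rsub: "\<And>i. R i \<subseteq> B i" unfolding R_def by auto
  have Rle: "\<And>i. card (R i) \<le> 1"
  proof -
    fix i show "card (R i) \<le> 1"
    proof (cases "i + 1 < n")
      case True thus ?thesis using cut unfolding R_def by simp
    next
      case False thus ?thesis unfolding R_def by simp
    qed
  qed
  have fspec: "\<And>i. i < n \<Longrightarrow> f i \<subseteq> B i \<and> card (f i) = 2 \<and> L i \<union> R i \<subseteq> f i"
  proof -
    fix i assume i: "i < n"
    have "card (L i \<union> R i) \<le> 2" using card_Un_le[of "L i" "R i"] Lle[OF i] Rle[of i] by linarith
    moreover have "L i \<union> R i \<subseteq> B i" using Lsub[of i] Rsub[of i] by (rule Un_least)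
    ultimately have "\<exists>g. g \<subseteq> B i \<and> card g = 2 \<and> L i \<union> R i \<subseteq> g"
      using ext3[OF fB[OF i] c3[rule_format, OF i]] by blast
    thus "f i \<subseteq> B i \<and> card (f i) = 2 \<and> L i \<union> R i \<subseteq> f i"
      unfolding f_def by (rule someI_ex)
  qed
  have lastc: "\<And>i. i < n \<Longrightarrow> odd i \<Longrightarrow> card (B i - L i) = 2"
  proof -
    fix i assume i: "i < n" "odd i"
    hence "0 < i" by (cases i) auto
    have "finite (L i)" using fB[OF i(1)] Lsub finite_subset by blast
    moreover have "card (L i) = 1" using Lc[OF \<open>0 < i\<close> i(1)] by blast
    moreover have "card (B i) = 3" using c3 i by blast
    ultimately show "card (B i - L i) = 2" using card_Diff_subset[of "L i" "B i"] Lsub[of i] by simp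
  qed
  define U where "U = \<Union>(\<Union>j<n. F j)"
  have FU: "\<And>j g. j < n \<Longrightarrow> g \<in> F j \<Longrightarrow> g \<subseteq> U" unfolding U_def by blast
  have fU: "\<And>j. j < n \<Longrightarrow> even j \<Longrightarrow> f j \<subseteq> U" using FU unfolding F_def by simp
  have ug: "maximal_matching E (\<Union>j<n. F j) \<and> card (\<Union>j<n. F j) = (\<Sum>j<n. card (F j))"
  proof (rule upper_gen[OF ch E])
    fix i assume i: "i < n"
    show "F i \<subseteq> C i" unfolding F_def using fspec[OF i] lastc[OF i] inC by auto
  next
    fix i g h assume "i < n" "g \<in> F i" "h \<in> F i" "g \<noteq> h"
    thus "g \<inter> h = {}" unfolding F_def by (auto split: if_splits)
  next
    fix i g h assume i: "i + 1 < n" and g: "g \<in> F i" and h: "h \<in> F (Suc i)"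
    show "g \<inter> h = {}"
    proof (cases "even i")
      case True
      hence "g = f i" using g unfolding F_def by simp
      hence gB: "g \<subseteq> B i" using fspec i by simp
      have "odd (Suc i)" using True by simp
      hence "Suc i = n - 1 \<and> h = B (Suc i) - L (Suc i)" using h unfolding F_def by (auto split: if_splits)
      hence "h = B (Suc i) - B i \<inter> B (Suc i)" using Lc[of "Suc i"] i by simp
      thus ?thesis using gB by blast
    next
      case False
      hence "F i = {}" using i unfolding F_def by simp
      thus ?thesis using g by simp
    qed
  next
    fix i e assume i: "i < n" and e: "e \<in> C i"
    obtain x y where xy: "e = {x,y}" "x \<in> B i" "y \<in> B i" "x \<noteq> y" using e unfolding C_def by blast
    have "\<exists>u v. u \<in> B i \<and> v \<in> B i \<and> u \<in> U \<and> v \<in> U \<and> u \<noteq> v"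
    proof (cases "even i")
      case True
      have "card (f i) = 2" using fspec[OF i] by simp
      then obtain u v where "f i = {u,v}" "u \<noteq> v" by (meson card_2_iff)
      thus ?thesis using fspec[OF i] fU[OF i True] by blast
    next
      case False
      hence i0: "0 < i" by (cases i) auto
      have ev: "even (i - 1)" using False i0 by simp
      have Ri: "R (i - 1) = B (i-1) \<inter> B i" unfolding R_def using i i0 by simp
      have "L i \<subseteq> f (i - 1)" using fspec[of "i-1"] Ri Lc[OF i0 i] i by auto
      moreover have "f (i - 1) \<subseteq> U" using fU[of "i-1"] ev i by simp
      ultimately have LU: "L i \<subseteq> U" by blast
      obtain u where u: "L i = {u}" using Lc[OF i0 i] card_1_singletonE by blast
      have uB: "u \<in> B (i-1)" "u \<in> B i" using Lc[OF i0 i] u by auto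
      show ?thesis
      proof (cases "i + 1 < n")
        case True
        have evs: "even (Suc i)" using False by simp
        have ss: "Suc i < n" using True by simp
        have "L (Suc i) = B i \<inter> B (Suc i) \<and> card (L (Suc i)) = 1" using Lc[OF zero_less_Suc ss] by (metis diff_Suc_1)
        then obtain v where v: "B i \<inter> B (Suc i) = {v}" by (metis card_1_singletonE)
        have "L (Suc i) \<subseteq> U" using fspec[OF True[simplified]] fU[OF True[simplified] evs] by blast
        hence vU: "v \<in> U" using v \<open>L (Suc i) = _ \<and> _\<close> by auto
        have "B (i-1) \<inter> B (Suc i) = {}" using dis[rule_format, of "i-1" "Suc i"] i i0 True by simp
        hence "u \<noteq> v" using uB v by blast
        thus ?thesis using u LU vU v uB by blast
      next
        case False
        hence last: "i = n - 1" using i by simp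
        have "card (B i - L i) = 2" using lastc[OF i] \<open>odd i\<close> by simp
        then obtain v where v: "v \<in> B i - L i" by (metis card_0_eq equals0I finite.emptyI zero_neq_numeral card.empty)
        have "B i - L i \<in> F i" unfolding F_def using \<open>odd i\<close> last by simp
        hence "v \<in> U" using FU[OF i] v by blast
        thus ?thesis using u LU v uB by blast
      qed
    qed
    then obtain u v where uv: "u \<in> B i" "v \<in> B i" "u \<in> U" "v \<in> U" "u \<noteq> v" by blast
    show "e \<inter> \<Union>(\<Union>j<n. F j) \<noteq> {}"
    proof
      assume "e \<inter> \<Union>(\<Union>j<n. F j) = {}"
      hence "x \<notin> U" "y \<notin> U" using xy unfolding U_def by auto
      thus False using four_in_three[OF fB[OF i] c3[rule_format, OF i] xy(2,3) uv(1,2) xy(4) uv(5)] uv by auto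
    qed
  qed
  have cF: "\<And>j. j < n \<Longrightarrow> card (F j) = (if even j \<or> j = n - 1 then 1 else 0)"
    unfolding F_def by simp
  have "(\<Sum>j<n. card (F j)) = (\<Sum>j<n. (if even j \<or> j = n - 1 then 1 else 0::nat))"
    by (rule sum.cong) (use cF in auto)
  also have "\<dots> = (n + 2) div 2" by (rule count_tri[OF n1])
  finally have cc: "card (\<Union>j<n. F j) = (n + 2) div 2" using ug by simp
  have finE: "finite E" unfolding E using chainB_finC[OF ch] by blast
  have mm: "maximal_matching E (\<Union>j<n. F j)" using ug by (rule conjunct1)
  show ?thesis by (rule sat_num_eqI[OF finE lower mm cc])
qed



lemma esub: "chainB n B C \<Longrightarrow> i < n \<Longrightarrow> e \<in> C i \<Longrightarrow> e \<subseteq> B i"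
  unfolding chainB_def by blast

lemma quad:
  assumes "\<forall>i<n. \<exists>a b c d. distinct [a, b, c, d] \<and> B i = {a, b, c, d} \<and>
                       C i = {{a, b}, {b, c}, {c, d}, {d, a}}" "i < n"
  obtains a b c d where "distinct [a, b, c, d]" "B i = {a, b, c, d}"
      "C i = {{a, b}, {b, c}, {c, d}, {d, a}}"
proof -
  from assms(1)[rule_format, OF assms(2)] show ?thesis
    apply (elim exE conjE)
    apply (rule that)
      apply assumption+
    done
qed

lemma sq_main:
  assumes n1: "n \<ge> 1" and sc: "chain_sq_cactus V E n"
  shows "sat_num E = n + 1"
proof -
  obtain B :: "nat \<Rightarrow> 'a set" and C :: "nat \<Rightarrow> 'a set set" where
    q: "\<forall>i<n. \<exists>a b c d. distinct [a, b, c, d] \<and> B i = {a, b, c, d} \<and>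
                       C i = {{a, b}, {b, c}, {c, d}, {d, a}}" and
    E: "E = (\<Union>i<n. C i)" and
    cut: "\<forall>i. i + 1 < n \<longrightarrow> card (B i \<inter> B (i + 1)) = 1" and
    dis: "\<forall>i j. i < n \<and> j < n \<and> i + 1 < j \<longrightarrow> B i \<inter> B j = {}"
    using sc unfolding chain_sq_cactus_def by (elim exE conjE) (rule that, assumption+)
  have ch: "chainB n B C" unfolding chainB_def
  proof (intro conjI allI impI ballI)
    fix i assume i: "i < n"
    obtain a b c d where abcd: "distinct [a, b, c, d]" "B i = {a, b, c, d}"
      "C i = {{a, b}, {b, c}, {c, d}, {d, a}}" by (rule quad[OF q i])
    show "finite (B i)" using abcd by simp
    fix e assume "e \<in> C i"
    thus "e \<subseteq> B i" "card e = 2" using abcd by auto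
  qed (use cut dis in auto)
  have lower: "\<And>M. maximal_matching E M \<Longrightarrow> n + 1 \<le> card M"
  proof -
    fix M assume mm: "maximal_matching E M"
    have m: "matching E M" using mm unfolding maximal_matching_def by blast
    have "2 * n \<le> 1 * card M + (n - 1)"
    proof (rule lower_sum[OF ch E mm])
      fix i assume i: "i < n"
      obtain a b c d where abcd: "distinct [a, b, c, d]" "B i = {a, b, c, d}"
        "C i = {{a, b}, {b, c}, {c, d}, {d, a}}" by (rule quad[OF q i])
      have "2 \<le> card (M \<inter> C i) + card (Xs M B C i)"
      proof (rule sq_local_lower[OF abcd(1,3)])
        show "M \<inter> C i \<subseteq> C i" by blast
        have md: "\<forall>e\<in>M. \<forall>f\<in>M. e \<noteq> f \<longrightarrow> e \<inter> f = {}" using m unfolding matching_def by (rule conjunct2)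
        show "\<forall>f\<in>M \<inter> C i. \<forall>g\<in>M \<inter> C i. f \<noteq> g \<longrightarrow> f \<inter> g = {}"
          using md by blast
        show "finite (Xs M B C i)" by (rule finite_subset[OF Xs_sub]) (simp add: abcd(2))
        show "\<forall>e\<in>C i. e \<inter> (Xs M B C i \<union> \<Union>(M \<inter> C i)) \<noteq> {}"
          using cover[OF ch E mm i] by blast
      qed
      thus "2 \<le> 1 * card (M \<inter> C i) + card (Xs M B C i)" by simp
    qed
    thus "n + 1 \<le> card M" using n1 by linarith
  qed
  define L where "L i = (if 0 < i then B (i-1) \<inter> B i else {})" for i
  define R where "R i = (if i + 1 < n then B i \<inter> B (Suc i) else {})" for i
  define P where "P i G = (if i = 0 then G \<subseteq> C i \<and> (\<forall>f\<in>G. \<forall>g\<in>G. f \<noteq> g \<longrightarrow> f \<inter> g = {})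
       \<and> card G = 2 \<and> \<Union>G = B i
     else (\<exists>f. G = {f} \<and> f \<in> C i \<and> f \<inter> L i = {} \<and> R i \<subseteq> f \<and> (\<forall>e\<in>C i. e \<inter> (L i \<union> f) \<noteq> {})))"
    for i G
  define F where "F i = (SOME G. P i G)" for i
  have Pex: "\<And>i. i < n \<Longrightarrow> \<exists>G. P i G"
  proof -
    fix i assume i: "i < n"
    obtain a b c d where abcd: "distinct [a, b, c, d]" "B i = {a, b, c, d}"
      "C i = {{a, b}, {b, c}, {c, d}, {d, a}}" by (rule quad[OF q i])
    show "\<exists>G. P i G"
    proof (cases "i = 0")
      case True
      have "P i {{a,b},{c,d}}" unfolding P_def using True abcd by (auto simp: doubleton_eq_iff)
      thus ?thesis by blast
    next
      case False
      then obtain k where k: "i = Suc k" by (cases i) auto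
      have Li: "L i = B k \<inter> B (Suc k)" unfolding L_def using k by simp
      have "card (L i) = 1" using cut k i Li by simp
      then obtain p where p: "L i = {p}" by (rule card_1_singletonE)
      have pB: "p \<in> {a,b,c,d}" using p Li k abcd(2) by blast
      have Rsub: "R i \<subseteq> {a,b,c,d} - {p}"
      proof (cases "i + 1 < n")
        case True
        have "B k \<inter> B (Suc i) = {}" using dis[rule_format, of k "Suc i"] True k by simp
        hence "p \<notin> B (Suc i)" using p Li by blast
        thus ?thesis unfolding R_def using True abcd(2) by auto
      next
        case False thus ?thesis unfolding R_def by simp
      qed
      have cR: "card (R i) \<le> 1"
      proof (cases "i + 1 < n")
        case True thus ?thesis using cut unfolding R_def by simp
      next
        case False thus ?thesis unfolding R_def by simp
      qed
      obtain f where f: "f \<in> C i" "p \<notin> f" "R i \<subseteq> f" "\<forall>e\<in>C i. e \<inter> insert p f \<noteq> {}"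
        using sq_local_upper[OF abcd(1) abcd(3) pB Rsub cR] by blast
      have "P i {f}" unfolding P_def using False f p by auto
      thus ?thesis by blast
    qed
  qed
  have PF: "\<And>i. i < n \<Longrightarrow> P i (F i)" unfolding F_def using Pex by (metis someI_ex)
  have F0: "F 0 \<subseteq> C 0 \<and> (\<forall>f\<in>F 0. \<forall>g\<in>F 0. f \<noteq> g \<longrightarrow> f \<inter> g = {}) \<and> card (F 0) = 2 \<and> \<Union>(F 0) = B 0"
    using PF[of 0] n1 unfolding P_def by simp
  have Fi: "\<And>i. 0 < i \<Longrightarrow> i < n \<Longrightarrow> \<exists>f. F i = {f} \<and> f \<in> C i \<and> f \<inter> L i = {} \<and> R i \<subseteq> f \<and> (\<forall>e\<in>C i. e \<inter> (L i \<union> f) \<noteq> {})"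
  proof -
    fix i :: nat assume "0 < i" "i < n"
    thus "\<exists>f. F i = {f} \<and> f \<in> C i \<and> f \<inter> L i = {} \<and> R i \<subseteq> f \<and> (\<forall>e\<in>C i. e \<inter> (L i \<union> f) \<noteq> {})"
      using PF[of i] unfolding P_def by simp
  qed
  define U where "U = \<Union>(\<Union>j<n. F j)"
  have FU: "\<And>j g. j < n \<Longrightarrow> g \<in> F j \<Longrightarrow> g \<subseteq> U" unfolding U_def by blast
  have B0U: "B 0 \<subseteq> U"
  proof -
    have "\<forall>g\<in>F 0. g \<subseteq> U" using FU[of 0] n1 by simp
    hence "\<Union>(F 0) \<subseteq> U" by blast
    thus ?thesis using F0 by simp
  qed
  have FC: "\<And>i. i < n \<Longrightarrow> F i \<subseteq> C i"
  proof -
    fix i assume i: "i < n"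
    show "F i \<subseteq> C i"
    proof (cases "i = 0")
      case True thus ?thesis using F0 by simp
    next
      case False thus ?thesis using Fi[of i] i by auto
    qed
  qed
  have ug: "maximal_matching E (\<Union>j<n. F j) \<and> card (\<Union>j<n. F j) = (\<Sum>j<n. card (F j))"
  proof (rule upper_gen[OF ch E FC])
    fix i g h assume i: "i < n" and g: "g \<in> F i" and h: "h \<in> F i" and gh: "g \<noteq> h"
    show "g \<inter> h = {}"
    proof (cases "i = 0")
      case True thus ?thesis using F0 g h gh by blast
    next
      case False thus ?thesis using Fi[of i] i g h gh by auto
    qed
  next
    fix i g h assume i: "i + 1 < n" and g: "g \<in> F i" and h: "h \<in> F (Suc i)"
    obtain f where f: "F (Suc i) = {f}" "f \<inter> L (Suc i) = {}"
      using Fi[of "Suc i"] i by auto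
    have "L (Suc i) = B i \<inter> B (Suc i)" unfolding L_def by simp
    moreover have "g \<subseteq> B i" using esub[OF ch _ , of i g] FC[of i] g i by auto
    moreover have "h \<subseteq> B (Suc i)" using esub[OF ch, of "Suc i" h] FC[of "Suc i"] h i by auto
    ultimately show "g \<inter> h = {}" using f h by blast
  next
    fix i e assume i: "i < n" and e: "e \<in> C i"
    have eB: "e \<subseteq> B i" "card e = 2" using ch i e unfolding chainB_def by auto
    have "e \<inter> U \<noteq> {}"
    proof (cases "i = 0")
      case True
      have "e \<noteq> {}" using eB by auto
      thus ?thesis using eB B0U True by blast
    next
      case False
      hence i0: "0 < i" by simp
      obtain f where f: "F i = {f}" "\<forall>e\<in>C i. e \<inter> (L i \<union> f) \<noteq> {}" using Fi[OF i0 i] by blast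
      have fU: "f \<subseteq> U" using FU[OF i] f by blast
      have LU: "L i \<subseteq> U"
      proof (cases "i = 1")
        case True thus ?thesis using B0U unfolding L_def by auto
      next
        case False
        hence i1: "0 < i - 1" using i0 by simp
        have "i - 1 < n" using i by simp
        then obtain f' where f': "F (i-1) = {f'}" "R (i-1) \<subseteq> f'" using Fi[OF i1] by blast
        have "R (i-1) = L i" unfolding R_def L_def using i i0 by simp
        moreover have "f' \<subseteq> U" using FU[OF \<open>i - 1 < n\<close>, of f'] f' by blast
        ultimately show ?thesis using f' by blast
      qed
      show ?thesis using f(2) e fU LU by blast
    qed
    thus "e \<inter> \<Union>(\<Union>j<n. F j) \<noteq> {}" unfolding U_def .
  qed
  have cF: "\<And>j. j < n \<Longrightarrow> card (F j) = (if j = 0 then 2 else 1)"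
  proof -
    fix j assume j: "j < n"
    show "card (F j) = (if j = 0 then 2 else 1)"
    proof (cases "j = 0")
      case True thus ?thesis using F0 by simp
    next
      case False thus ?thesis using Fi[of j] j by auto
    qed
  qed
  have "(\<Sum>j<n. card (F j)) = (\<Sum>j<n. (if j = 0 then 2 else 1::nat))"
    by (rule sum.cong) (use cF in auto)
  also have "\<dots> = n + 1" using count_sq[of n] n1 by simp
  finally have cc: "card (\<Union>j<n. F j) = n + 1" using ug by simp
  have finE: "finite E" unfolding E using chainB_finC[OF ch] by blast
  have mm: "maximal_matching E (\<Union>j<n. F j)" using ug by (rule conjunct1)
  show ?thesis by (rule sat_num_eqI[OF finE lower mm cc])
qed


theorem theorem3p3:
  shows "(\<forall>(V :: 'a set) E n. n \<ge> 1 \<and> chain_tri_cactus V E n \<longrightarrow>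
            int (sat_num E) = \<lfloor>(real n - 2) / 2\<rfloor> + 2) \<and>
         (\<forall>(V :: 'a set) E n. n \<ge> 1 \<and> chain_sq_cactus V E n \<longrightarrow>
            sat_num E = n + 1)"
proof (intro conjI allI impI)
  fix V :: "'a set" and E n assume h: "n \<ge> 1 \<and> chain_tri_cactus V E n"
  hence s: "sat_num E = (n + 2) div 2" using tri_main by blast
  have "(real n - 2) / 2 = real_of_int (int n - 2) / real_of_int 2" by simp
  hence fl: "\<lfloor>(real n - 2) / 2\<rfloor> = (int n - 2) div 2" by (simp only: floor_divide_of_int_eq)
  have i1: "int ((n + 2) div 2) = (int n + 2) div 2" by (simp add: zdiv_int)
  have i2: "(int n + 2) div 2 = (int n - 2) div 2 + 2" by presburger
  show "int (sat_num E) = \<lfloor>(real n - 2) / 2\<rfloor> + 2" using s fl i1 i2 by simp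
next
  fix V :: "'a set" and E n assume h: "n \<ge> 1 \<and> chain_sq_cactus V E n"
  thus "sat_num E = n + 1" using sq_main by blast
qed

end
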